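(* Let $n\ge2$. Then $H_n\rtimes S_n$ is generated by at most $3$ elements.
   Context: $\mathbb{N}=\{1,2,\dots\}$, $X_n=\{1,\dots,n\}\times\mathbb{N}$. $H_n$ is the group of bijections $g$ of $X_n$ with $z_i(g)\in\mathbb{N}$, $t_i(g)\in\mathbb{Z}$ such that $(i,m)g=(i,m+t_i(g))$ for all $m\ge z_i(g)$ (right action). Each $\sigma\in S_n$ acts on $X_n$ by $(i,m)\sigma=(i\sigma,m)$, and $H_n\rtimes S_n$ is the subgroup of $\mathrm{Sym}(X_n)$ generated by $H_n$ and these permutations. *)

theory Defs
  imports "HOL-Algebra.Algebra" "HOL-Combinatorics.Permutations"
begin

text \<open>Natural numbers start at 1 in the paper; we use HOL nat with explicit bounds.
  X_n = {1..n} x {1,2,...}. Elements of Sym(X_n) are the carrier of BijGroup X_n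
  (extensional bijections of X_n).\<close>

definition Xn :: "nat \<Rightarrow> (nat \<times> nat) set" where
  "Xn n = {1..n} \<times> {m. 1 \<le> m}"

definition SymX :: "nat \<Rightarrow> (nat \<times> nat \<Rightarrow> nat \<times> nat) monoid" where
  "SymX n = BijGroup (Xn n)"

definition Hn :: "nat \<Rightarrow> (nat \<times> nat \<Rightarrow> nat \<times> nat) set" where
  "Hn n = {g \<in> Bij (Xn n). \<exists>z::nat \<Rightarrow> nat. \<exists>t::nat \<Rightarrow> int.
      \<forall>i\<in>{1..n}. 1 \<le> z i \<and> (\<forall>m. z i \<le> m \<longrightarrow>
         fst (g (i, m)) = i \<and> int (snd (g (i, m))) = int m + t i)}"

definition perm_lift :: "nat \<Rightarrow> (nat \<Rightarrow> nat) \<Rightarrow> (nat \<times> nat \<Rightarrow> nat \<times> nat)" where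
  "perm_lift n \<sigma> = restrict (\<lambda>(i, m). (\<sigma> i, m)) (Xn n)"

definition Sn_lift :: "nat \<Rightarrow> (nat \<times> nat \<Rightarrow> nat \<times> nat) set" where
  "Sn_lift n = {perm_lift n \<sigma> | \<sigma>. \<sigma> permutes {1..n}}"

text \<open>H_n \<rtimes> S_n as the subgroup of Sym(X_n) generated by H_n and the lifted permutations.\<close>

definition HnSn :: "nat \<Rightarrow> (nat \<times> nat \<Rightarrow> nat \<times> nat) set" where
  "HnSn n = generate (SymX n) (Hn n \<union> Sn_lift n)"

end

theory Submission
  imports Defs
begin

lemma G_mult: "f \<in> Bij S \<Longrightarrow> g \<in> Bij S \<Longrightarrow> f \<otimes>\<^bsub>BijGroup S\<^esub> g = compose S f g"
  by (simp add: BijGroup_def)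
lemma G_one: "\<one>\<^bsub>BijGroup S\<^esub> = (\<lambda>x\<in>S. x)"
  by (simp add: BijGroup_def)
lemma G_carrier: "carrier (BijGroup S) = Bij S"
  by (simp add: BijGroup_def)

lemma Xn_iff: "(i, m) \<in> Xn n \<longleftrightarrow> 1 \<le> i \<and> i \<le> n \<and> 1 \<le> m"
  by (auto simp: Xn_def)

lemma L_map: "\<sigma> permutes {1..n} \<Longrightarrow> x \<in> Xn n \<Longrightarrow> perm_lift n \<sigma> x \<in> Xn n"
  by (cases x) (auto simp: perm_lift_def Xn_iff dest: permutes_in_image[where x = "fst x"])

lemma L_comp: "\<sigma> permutes {1..n} \<Longrightarrow> \<tau> permutes {1..n} \<Longrightarrow>
   compose (Xn n) (perm_lift n \<sigma>) (perm_lift n \<tau>) = perm_lift n (\<sigma> \<circ> \<tau>)"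
  apply (rule ext)
  subgoal for x
    apply (cases x)
    using L_map[of \<tau> n x]
    by (auto simp: compose_def perm_lift_def)
  done

lemma L_id: "perm_lift n id = (\<lambda>x\<in>Xn n. x)"
  by (auto simp: perm_lift_def)

lemma L_Bij: "\<sigma> permutes {1..n} \<Longrightarrow> perm_lift n \<sigma> \<in> Bij (Xn n)"
proof -
  assume s: "\<sigma> permutes {1..n}"
  hence si: "inv_into UNIV \<sigma> permutes {1..n}" by (rule permutes_inv)
  have "bij_betw (perm_lift n \<sigma>) (Xn n) (Xn n)"
  proof (rule bij_betw_byWitness[where f' = "perm_lift n (inv_into UNIV \<sigma>)"])
    show "\<forall>a\<in>Xn n. perm_lift n (inv_into UNIV \<sigma>) (perm_lift n \<sigma> a) = a"
      using L_comp[OF si s] permutes_inv_o(2)[OF s] L_id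
      by (metis compose_eq restrict_apply')
    show "\<forall>a\<in>Xn n. perm_lift n \<sigma> (perm_lift n (inv_into UNIV \<sigma>) a) = a"
      using L_comp[OF s si] permutes_inv_o(1)[OF s] L_id
      by (metis compose_eq restrict_apply')
    show "perm_lift n \<sigma> ` Xn n \<subseteq> Xn n" using L_map[OF s] by auto
    show "perm_lift n (inv_into UNIV \<sigma>) ` Xn n \<subseteq> Xn n" using L_map[OF si] by auto
  qed
  thus ?thesis by (simp add: Bij_def perm_lift_def)
qed

lemma L_inv: "\<sigma> permutes {1..n} \<Longrightarrow> m_inv (BijGroup (Xn n)) (perm_lift n \<sigma>) = perm_lift n (inv_into UNIV \<sigma>)"
  apply (rule group.inv_equality[OF group_BijGroup])
  by (simp_all add: G_mult G_one G_carrier L_Bij permutes_inv L_comp permutes_inv_o L_id)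

definition TT :: "'a set \<Rightarrow> 'a \<Rightarrow> 'a \<Rightarrow> ('a \<Rightarrow> 'a)" where
  "TT S a b = restrict (Transposition.transpose a b) S"

lemma TT_Bij: "a \<in> S \<Longrightarrow> b \<in> S \<Longrightarrow> TT S a b \<in> Bij S"
  by (auto simp: TT_def Bij_def bij_betw_transpose_iff)

lemma compose_restrict: "g ` S \<subseteq> S \<Longrightarrow> compose S (restrict f S) (restrict g S) = restrict (f \<circ> g) S"
  by (auto simp: compose_def fun_eq_iff)

lemma TT_same: "TT S a a = (\<lambda>x\<in>S. x)"
  by (simp add: TT_def id_def)

lemma TT_comp: "a \<in> S \<Longrightarrow> b \<in> S \<Longrightarrow> c \<in> S \<Longrightarrow> d \<in> S \<Longrightarrow>
   compose S (TT S a b) (TT S c d) = restrict (Transposition.transpose a b \<circ> Transposition.transpose c d) S"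
  unfolding TT_def by (rule compose_restrict) auto

lemma conj_T:
  assumes g: "g \<in> Bij S" and a: "a \<in> S" and b: "b \<in> S"
  shows "compose S g (compose S (TT S a b) (restrict (inv_into S g) S)) = TT S (g a) (g b)"
proof (rule ext)
  fix x
  have bij: "bij_betw g S S" and ext: "g \<in> extensional S" using g by (auto simp: Bij_def)
  show "compose S g (compose S (TT S a b) (restrict (inv_into S g) S)) x = TT S (g a) (g b) x"
  proof (cases "x \<in> S")
    case True
    define y where "y = inv_into S g x"
    have y: "y \<in> S" "g y = x" using True bij unfolding y_def
      by (auto simp: bij_betw_def inv_into_into f_inv_into_f)
    have inj: "inj_on g S" using bij by (auto simp: bij_betw_def)
    have "g (Transposition.transpose a b y) = Transposition.transpose (g a) (g b) (g y)"
      using inj a b y(1) by (auto simp: Transposition.transpose_def inj_on_eq_iff)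
    thus ?thesis using True y by (simp add: compose_def TT_def y_def)
  next
    case False thus ?thesis by (simp add: compose_def TT_def)
  qed
qed

definition hl :: "nat \<Rightarrow> nat \<Rightarrow> (nat \<times> nat \<Rightarrow> nat \<times> nat)" where
  "hl n j = restrict (\<lambda>(i,m). if i = 1 then (1, m+1) else if i = j then (if m = 1 then (1,1) else (j, m-1)) else (i,m)) (Xn n)"
definition hli :: "nat \<Rightarrow> nat \<Rightarrow> (nat \<times> nat \<Rightarrow> nat \<times> nat)" where
  "hli n j = restrict (\<lambda>(i,m). if i = 1 then (if m = 1 then (j,1) else (1, m-1)) else if i = j then (j, m+1) else (i,m)) (Xn n)"

lemma hl_Bij: "j \<in> {2..n} \<Longrightarrow> hl n j \<in> Bij (Xn n)"
  unfolding Bij_def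
  apply (auto simp: hl_def)
  apply (rule bij_betw_byWitness[where f' = "hli n j"])
  by (auto simp: hl_def hli_def Xn_iff split: if_splits)

lemma hli_Bij: "j \<in> {2..n} \<Longrightarrow> hli n j \<in> Bij (Xn n)"
  unfolding Bij_def
  apply (auto simp: hli_def)
  apply (rule bij_betw_byWitness[where f' = "hl n j"])
  by (auto simp: hl_def hli_def Xn_iff split: if_splits)

lemma hl_inv: assumes "j \<in> {2..n}" shows "m_inv (BijGroup (Xn n)) (hl n j) = hli n j"
proof (rule group.inv_equality[OF group_BijGroup])
  have "compose (Xn n) (hli n j) (hl n j) = (\<lambda>x\<in>Xn n. x)"
    using assms by (auto simp: compose_def hl_def hli_def Xn_iff fun_eq_iff)
  thus "hli n j \<otimes>\<^bsub>BijGroup (Xn n)\<^esub> hl n j = \<one>\<^bsub>BijGroup (Xn n)\<^esub>"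
    using assms hl_Bij hli_Bij by (simp add: G_mult G_one)
qed (use assms hl_Bij hli_Bij in \<open>auto simp: G_carrier\<close>)

definition lp :: "int \<Rightarrow> nat \<times> nat" where
  "lp k = (if k \<ge> 1 then (1, nat k) else (2, nat (1 - k)))"

lemma lp_X: "2 \<le> n \<Longrightarrow> lp k \<in> Xn n"
  by (auto simp: lp_def Xn_iff)

lemma hl_lp: "2 \<le> n \<Longrightarrow> hl n 2 (lp k) = lp (k+1)"
  by (auto simp: lp_def hl_def Xn_iff nat_add_distrib)

lemma hli_lp: "2 \<le> n \<Longrightarrow> hli n 2 (lp k) = lp (k-1)"
  by (auto simp: lp_def hli_def Xn_iff nat_diff_distrib)

lemma lp_surj: "i \<in> {1,2} \<Longrightarrow> 1 \<le> m \<Longrightarrow> \<exists>k. lp k = (i, m)"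
  apply (auto simp: lp_def)
  apply (rule exI[of _ "int m"], simp)
  apply (rule exI[of _ "1 - int m"], simp)
  done

lemma lp_inj: "lp k = lp l \<Longrightarrow> k = l"
  by (auto simp: lp_def split: if_splits)

lemma TT_commute: "TT S a b = TT S b a"
  by (simp add: TT_def transpose_commute)

lemma TT_triple: "a \<in> S \<Longrightarrow> b \<in> S \<Longrightarrow> c \<in> S \<Longrightarrow> a \<noteq> c \<Longrightarrow> b \<noteq> c \<Longrightarrow>
  compose S (TT S a b) (compose S (TT S b c) (TT S a b)) = TT S a c"
  apply (rule ext)
  subgoal for x
    by (cases "x \<in> S") (auto simp: compose_def TT_def transpose_triple Transposition.transpose_def)
  done

definition cyc :: "nat \<Rightarrow> nat \<Rightarrow> nat" where
  "cyc n i = (if i = n then 1 else if 1 \<le> i \<and> i < n then i + 1 else i)"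

lemma cyc_permutes: "1 \<le> n \<Longrightarrow> cyc n permutes {1..n}"
proof (rule bij_imp_permutes)
  show "bij_betw (cyc n) {1..n} {1..n}"
    by (rule bij_betw_byWitness[where f' = "\<lambda>i. if i = 1 then n else if 1 < i \<and> i \<le> n then i - 1 else i"])
     (auto simp: cyc_def)
qed (auto simp: cyc_def)

lemma conj_perm: "\<sigma> permutes S \<Longrightarrow> \<sigma> \<circ> Transposition.transpose a b \<circ> inv_into UNIV \<sigma> = Transposition.transpose (\<sigma> a) (\<sigma> b)"
  apply (rule ext)
  subgoal for x
    using permutes_inverses[of \<sigma> S]
    by (auto simp: Transposition.transpose_def)
  done

definition ET :: "nat \<Rightarrow> (nat \<times> nat \<Rightarrow> nat \<times> nat) \<Rightarrow> (nat \<Rightarrow> int) \<Rightarrow> bool" where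
  "ET n g t \<longleftrightarrow> (\<exists>N. \<forall>i\<in>{1..n}. \<forall>m\<ge>N. 1 \<le> int m + t i \<and> g (i,m) = (i, nat (int m + t i)))"

lemma sum_bound: "i \<in> {1..(n::nat)} \<Longrightarrow> nat \<bar>s i\<bar> \<le> (\<Sum>i\<in>{1..n}. nat \<bar>s i\<bar>)"
  by (rule member_le_sum) auto

lemma ET_comp:
  assumes g: "ET n g t" and f: "ET n f s"
  shows "ET n (compose (Xn n) g f) (\<lambda>i. t i + s i)"
proof -
  obtain Ng where Ng: "\<forall>i\<in>{1..n}. \<forall>m\<ge>Ng. 1 \<le> int m + t i \<and> g (i,m) = (i, nat (int m + t i))"
    using g by (auto simp: ET_def)
  obtain Nf where Nf: "\<forall>i\<in>{1..n}. \<forall>m\<ge>Nf. 1 \<le> int m + s i \<and> f (i,m) = (i, nat (int m + s i))"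
    using f by (auto simp: ET_def)
  define N where "N = Nf + Ng + (\<Sum>i\<in>{1..n}. nat \<bar>s i\<bar>) + 1"
  have "\<forall>i\<in>{1..n}. \<forall>m\<ge>N. 1 \<le> int m + (t i + s i) \<and> compose (Xn n) g f (i,m) = (i, nat (int m + (t i + s i)))"
  proof (intro ballI allI impI)
    fix i m assume i: "i \<in> {1..n}" and m: "N \<le> m"
    have b: "nat \<bar>s i\<bar> \<le> (\<Sum>i\<in>{1..n}. nat \<bar>s i\<bar>)" by (rule sum_bound[OF i])
    have f1: "f (i,m) = (i, nat (int m + s i))" "1 \<le> int m + s i" using Nf i m by (auto simp: N_def)
    have m2: "Ng \<le> nat (int m + s i)" using m b unfolding N_def by linarith
    have g0: "1 \<le> int (nat (int m + s i)) + t i \<and> g (i, nat (int m + s i)) = (i, nat (int (nat (int m + s i)) + t i))"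
      using Ng i m2 by blast
    have g1: "1 \<le> int m + s i + t i" "g (i, nat (int m + s i)) = (i, nat (int m + s i + t i))"
      using g0 f1(2) by auto
    have X: "(i,m) \<in> Xn n" using i m by (auto simp: Xn_iff N_def)
    show "1 \<le> int m + (t i + s i) \<and> compose (Xn n) g f (i,m) = (i, nat (int m + (t i + s i)))"
      using f1 g1 X by (simp add: compose_def add_ac)
  qed
  thus ?thesis unfolding ET_def by blast
qed

lemma ET_inv:
  assumes G: "g \<in> Bij (Xn n)" and g: "ET n g t"
  shows "ET n (restrict (inv_into (Xn n) g) (Xn n)) (\<lambda>i. - t i)"
proof -
  obtain Ng where Ng: "\<forall>i\<in>{1..n}. \<forall>m\<ge>Ng. 1 \<le> int m + t i \<and> g (i,m) = (i, nat (int m + t i))"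
    using g by (auto simp: ET_def)
  have inj: "inj_on g (Xn n)" using G by (auto simp: Bij_def bij_betw_def)
  define N where "N = Ng + (\<Sum>i\<in>{1..n}. nat \<bar>t i\<bar>) + 1"
  have "\<forall>i\<in>{1..n}. \<forall>m\<ge>N. 1 \<le> int m + - t i \<and> restrict (inv_into (Xn n) g) (Xn n) (i,m) = (i, nat (int m + - t i))"
  proof (intro ballI allI impI)
    fix i m assume i: "i \<in> {1..n}" and m: "N \<le> m"
    have b: "nat \<bar>t i\<bar> \<le> (\<Sum>i\<in>{1..n}. nat \<bar>t i\<bar>)" by (rule sum_bound[OF i])
    define m0 where "m0 = nat (int m - t i)"
    have m0: "Ng \<le> m0" "1 \<le> m0" using m b unfolding N_def m0_def by linarith+
    have "g (i, m0) = (i, m)" using Ng i m0 m b unfolding m0_def N_def by auto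
    moreover have X: "(i,m) \<in> Xn n" "(i,m0) \<in> Xn n" using i m m0 by (auto simp: Xn_iff N_def)
    ultimately have "inv_into (Xn n) g (i,m) = (i,m0)" using inj by (metis inv_into_f_f)
    thus "1 \<le> int m + - t i \<and> restrict (inv_into (Xn n) g) (Xn n) (i,m) = (i, nat (int m + - t i))"
      using X m b unfolding m0_def N_def by auto
  qed
  thus ?thesis unfolding ET_def by blast
qed

definition dl :: "nat \<Rightarrow> nat \<Rightarrow> int" where
  "dl j i = (if i = 1 then 1 else if i = j then -1 else 0)"

lemma ET_hl: "j \<in> {2..n} \<Longrightarrow> ET n (hl n j) (dl j)"
  unfolding ET_def
  apply (rule exI[of _ 2])
  by (auto simp: hl_def dl_def Xn_iff nat_diff_distrib)

lemma ET_cong: "ET n g t \<Longrightarrow> (\<And>i. i \<in> {1..n} \<Longrightarrow> t i = t' i) \<Longrightarrow> ET n g t'"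
  unfolding ET_def by auto

lemma ET_Hn: "g \<in> Hn n \<Longrightarrow> \<exists>t. ET n g t"
proof -
  assume "g \<in> Hn n"
  then obtain z t where G: "g \<in> Bij (Xn n)" and zt: "\<forall>i\<in>{1..n}. 1 \<le> z i \<and> (\<forall>m. z i \<le> m \<longrightarrow>
         fst (g (i, m)) = i \<and> int (snd (g (i, m))) = int m + t i)"
    by (auto simp: Hn_def)
  define N where "N = (\<Sum>i\<in>{1..n}. z i)"
  have "\<forall>i\<in>{1..n}. \<forall>m\<ge>N. 1 \<le> int m + t i \<and> g (i,m) = (i, nat (int m + t i))"
  proof (intro ballI allI impI)
    fix i m assume i: "i \<in> {1..n}" and m: "N \<le> m"
    have "z i \<le> N" unfolding N_def by (rule member_le_sum) (use i in auto)
    hence e: "fst (g (i, m)) = i" "int (snd (g (i, m))) = int m + t i" "1 \<le> z i" using zt i m by auto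
    have "(i,m) \<in> Xn n" using i m e(3) \<open>z i \<le> N\<close> by (auto simp: Xn_iff)
    hence "g (i,m) \<in> Xn n" using G by (auto simp: Bij_def bij_betw_def)
    hence "1 \<le> snd (g (i,m))" by (cases "g (i,m)") (auto simp: Xn_iff)
    thus "1 \<le> int m + t i \<and> g (i,m) = (i, nat (int m + t i))" using e
      by (cases "g (i,m)") auto
  qed
  thus ?thesis unfolding ET_def by blast
qed

lemma ET_zero: "ET n g (\<lambda>_. 0) \<Longrightarrow> \<exists>N. \<forall>x\<in>Xn n. N \<le> snd x \<longrightarrow> g x = x"
  unfolding ET_def by (auto simp: Xn_def)

lemma ET_sum:
  assumes G: "g \<in> Bij (Xn n)" and g: "ET n g t"
  shows "(\<Sum>i\<in>{1..n}. t i) = 0"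
proof -
  obtain Ng where Ng: "\<forall>i\<in>{1..n}. \<forall>m\<ge>Ng. 1 \<le> int m + t i \<and> g (i,m) = (i, nat (int m + t i))"
    using g by (auto simp: ET_def)
  have bij: "bij_betw g (Xn n) (Xn n)" using G by (auto simp: Bij_def)
  have inj: "inj_on g (Xn n)" and im: "g ` Xn n = Xn n" using bij by (auto simp: bij_betw_def)
  define M where "M = Ng + (\<Sum>i\<in>{1..n}. nat \<bar>t i\<bar>) + 1"
  have Mt: "1 \<le> int M + t i" "Ng \<le> M" "1 \<le> M" if "i \<in> {1..n}" for i
    using sum_bound[OF that, of t] unfolding M_def by linarith+
  define Hd where "Hd = Sigma {1..n} (\<lambda>i. {1..<M})"
  define Hd' where "Hd' = Sigma {1..n} (\<lambda>i. {1..<nat (int M + t i)})"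
  define Tl where "Tl = {x\<in>Xn n. M \<le> snd x}"
  define Tl' where "Tl' = {x\<in>Xn n. nat (int M + t (fst x)) \<le> snd x}"
  have HdX: "Hd = Xn n - Tl" by (auto simp: Hd_def Tl_def Xn_def)
  have HdX': "Hd' = Xn n - Tl'" by (auto simp: Hd'_def Tl'_def Xn_def)
  have TlX: "Tl \<subseteq> Xn n" by (auto simp: Tl_def)
  have gT: "g ` Tl = Tl'"
  proof
    show "g ` Tl \<subseteq> Tl'"
    proof
      fix y assume "y \<in> g ` Tl"
      then obtain i m where x: "(i,m) \<in> Tl" "y = g (i,m)" by auto
      hence i: "i \<in> {1..n}" and m: "M \<le> m" by (auto simp: Tl_def Xn_iff)
      have "1 \<le> int m + t i \<and> g (i,m) = (i, nat (int m + t i))" using Ng i m Mt(2)[OF i] by auto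
      thus "y \<in> Tl'" using x i m by (auto simp: Tl'_def Xn_iff)
    qed
  next
    show "Tl' \<subseteq> g ` Tl"
    proof
      fix y assume y: "y \<in> Tl'"
      then obtain i m' where ym: "y = (i, m')" "i \<in> {1..n}" "nat (int M + t i) \<le> m'"
        by (cases y) (auto simp: Tl'_def Xn_iff)
      define m where "m = nat (int m' - t i)"
      have m: "M \<le> m" using ym Mt[OF ym(2)] unfolding m_def by linarith
      have "1 \<le> int m + t i \<and> g (i,m) = (i, nat (int m + t i))" using Ng ym(2) m Mt(2)[OF ym(2)] by auto
      moreover have "nat (int m + t i) = m'" using ym Mt[OF ym(2)] unfolding m_def by linarith
      moreover have "(i,m) \<in> Tl" using ym(2) m Mt(3)[OF ym(2)] by (auto simp: Tl_def Xn_iff)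
      ultimately show "y \<in> g ` Tl" using ym(1) by (metis image_eqI)
    qed
  qed
  have gH: "g ` Hd = Hd'"
    unfolding HdX HdX' using inj_on_image_set_diff[OF inj, of "Xn n" Tl] TlX im gT by auto
  have "card Hd = card Hd'" using gH inj HdX by (metis Diff_subset card_image inj_on_subset)
  hence "(\<Sum>i\<in>{1..n}. M - 1) = (\<Sum>i\<in>{1..n}. nat (int M + t i) - 1)"
    by (simp add: Hd_def Hd'_def)
  hence "int (\<Sum>i\<in>{1..n}. M - 1) = int (\<Sum>i\<in>{1..n}. nat (int M + t i) - 1)" by simp
  moreover have "int (\<Sum>i\<in>{1..n}. M - 1) = (\<Sum>i\<in>{1..n}. int M - 1)"
    unfolding of_nat_sum by (rule sum.cong) (auto simp: M_def)
  moreover have "int (\<Sum>i\<in>{1..n}. nat (int M + t i) - 1) = (\<Sum>i\<in>{1..n}. int M + t i - 1)"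
  proof -
    have "int (nat (int M + t i) - 1) = int M + t i - 1" if "i \<in> {1..n}" for i
      using Mt(1)[OF that] by linarith
    thus ?thesis unfolding of_nat_sum by (intro sum.cong) auto
  qed
  ultimately have "(\<Sum>i\<in>{1..n}. int M - 1) = (\<Sum>i\<in>{1..n}. int M + t i - 1)" by simp
  thus ?thesis by (simp add: sum.distrib sum_subtractf algebra_simps)
qed

lemma sum_dl: "j \<in> {2..n} \<Longrightarrow> (\<Sum>i\<in>{1..n}. dl j i) = 0"
proof -
  assume j: "j \<in> {2..n}"
  have "(\<Sum>i\<in>{1..n}. dl j i) = (\<Sum>i\<in>{1..n}. (if i = 1 then 1 else 0) - (if i = j then 1 else 0))"
    by (rule sum.cong) (use j in \<open>auto simp: dl_def\<close>)
  also have "\<dots> = 0" using j by (simp add: sum_subtractf)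
  finally show ?thesis .
qed

lemma ET_one: "(\<And>i. i \<in> {1..n} \<Longrightarrow> t i = 0) \<Longrightarrow> ET n (\<lambda>x\<in>Xn n. x) t"
  unfolding ET_def by (rule exI[of _ 1]) (auto simp: Xn_iff)

lemma hl_conj: "j \<in> {2..n} \<Longrightarrow>
  compose (Xn n) (perm_lift n (Transposition.transpose 2 j)) (compose (Xn n) (hl n 2) (perm_lift n (Transposition.transpose 2 j))) = hl n j"
  apply (rule ext)
  subgoal for x
    by (cases x) (auto simp: compose_def perm_lift_def hl_def Xn_iff Transposition.transpose_def)
  done

lemma comm: "3 \<le> n \<Longrightarrow>
  compose (Xn n) (hl n 2) (compose (Xn n) (hl n 3) (compose (Xn n) (hli n 2) (hli n 3))) = TT (Xn n) (1,1) (1,2)"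
  apply (rule ext)
  subgoal for x
    by (cases x) (auto simp: compose_def hli_def hl_def TT_def Xn_iff Transposition.transpose_def)
  done

context
  fixes n :: nat and K
  assumes n2: "2 \<le> n" and sg: "subgroup K (BijGroup (Xn n))"
begin

lemma K_Bij: "f \<in> K \<Longrightarrow> f \<in> Bij (Xn n)"
  using subgroup.subset[OF sg] by (auto simp: G_carrier)

lemma K_comp: "f \<in> K \<Longrightarrow> g \<in> K \<Longrightarrow> compose (Xn n) f g \<in> K"
  using subgroup.m_closed[OF sg, of f g] K_Bij by (simp add: G_mult)

lemma K_minv: "f \<in> K \<Longrightarrow> m_inv (BijGroup (Xn n)) f \<in> K"
  using subgroup.m_inv_closed[OF sg] by blast

lemma K_inv: "f \<in> K \<Longrightarrow> restrict (inv_into (Xn n) f) (Xn n) \<in> K"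
  using K_minv[of f] K_Bij[of f] by (simp add: inv_BijGroup)

lemma K_one: "(\<lambda>x\<in>Xn n. x) \<in> K"
  using subgroup.one_closed[OF sg] by (simp add: G_one)

lemma K_conjT: "g \<in> K \<Longrightarrow> a \<in> Xn n \<Longrightarrow> b \<in> Xn n \<Longrightarrow> TT (Xn n) a b \<in> K \<Longrightarrow> TT (Xn n) (g a) (g b) \<in> K"
  using conj_T[OF K_Bij, of g a b] K_comp K_inv by metis

definition PP :: "(nat \<Rightarrow> nat) \<Rightarrow> bool" where
  "PP \<sigma> \<longleftrightarrow> \<sigma> permutes {1..n} \<and> perm_lift n \<sigma> \<in> K"

lemma PP_comp: "PP \<sigma> \<Longrightarrow> PP \<tau> \<Longrightarrow> PP (\<sigma> \<circ> \<tau>)"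
  unfolding PP_def using K_comp L_comp permutes_compose by metis

lemma PP_inv: "PP \<sigma> \<Longrightarrow> PP (inv_into UNIV \<sigma>)"
  unfolding PP_def using K_minv L_inv permutes_inv by metis

lemma PP_conj: "PP \<sigma> \<Longrightarrow> PP (Transposition.transpose a b) \<Longrightarrow> PP (Transposition.transpose (\<sigma> a) (\<sigma> b))"
  using PP_comp PP_inv conj_perm[of \<sigma> "{1..n}" a b] unfolding PP_def by metis

lemma PP_all:
  assumes c: "perm_lift n (cyc n) \<in> K" and s: "perm_lift n (Transposition.transpose 1 2) \<in> K"
  and p: "p permutes {1..n}"
  shows "perm_lift n p \<in> K"
proof -
  have s': "PP (Transposition.transpose 1 2)" using s n2 by (simp add: PP_def permutes_swap_id)
  have c': "PP (cyc n)" using c n2 cyc_permutes by (simp add: PP_def)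
  have adj: "k + 1 < n \<Longrightarrow> PP (Transposition.transpose (k+1) (k+2))" for k
  proof (induction k)
    case 0 then show ?case using s' by (simp add: numeral_2_eq_2)
  next
    case (Suc k)
    hence "PP (Transposition.transpose (cyc n (k+1)) (cyc n (k+2)))" using PP_conj c' by simp
    moreover have "cyc n (k+1) = Suc k + 1" "cyc n (k+2) = Suc k + 2" using Suc.prems by (auto simp: cyc_def)
    ultimately show ?case by simp
  qed
  have one: "k + 2 \<le> n \<Longrightarrow> PP (Transposition.transpose 1 (k+2))" for k
  proof (induction k)
    case 0 then show ?case using s' by (simp add: numeral_2_eq_2)
  next
    case (Suc k)
    have a: "PP (Transposition.transpose (k+3) (k+2))" using adj[of "k+1"] Suc.prems
      by (simp add: transpose_commute numeral_3_eq_3)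
    have b: "PP (Transposition.transpose (k+2) 1)" using Suc by (simp add: transpose_commute)
    have "Transposition.transpose (k+3) (k+2) \<circ> Transposition.transpose (k+2) 1 \<circ> Transposition.transpose (k+3) (k+2)
      = Transposition.transpose (k+3) 1" by (rule transpose_comp_triple) auto
    hence "PP (Transposition.transpose (k+3) 1)" using PP_comp a b by metis
    thus ?case by (simp add: transpose_commute numeral_3_eq_3)
  qed
  have one': "a \<in> {1..n} \<Longrightarrow> PP (Transposition.transpose 1 a)" for a
  proof (cases "a = 1")
    case True thus ?thesis using L_id K_one by (simp add: PP_def)
  next
    case False
    assume "a \<in> {1..n}"
    then obtain k where "a = k + 2" "k + 2 \<le> n" using False by (metis add.commute atLeastAtMost_iff le_Suc_ex le_antisym not_less_eq_eq one_add_one plus_1_eq_Suc)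
    thus ?thesis using one by simp
  qed
  have all: "a \<in> {1..n} \<Longrightarrow> b \<in> {1..n} \<Longrightarrow> PP (Transposition.transpose a b)" for a b
  proof -
    assume ab: "a \<in> {1..n}" "b \<in> {1..n}"
    show ?thesis
    proof (cases "a = b \<or> a = 1 \<or> b = 1")
      case True thus ?thesis using one' ab L_id K_one by (auto simp: PP_def transpose_commute)
    next
      case False
      have "Transposition.transpose a 1 \<circ> Transposition.transpose 1 b \<circ> Transposition.transpose a 1
        = Transposition.transpose a b" by (rule transpose_comp_triple) (use False in auto)
      thus ?thesis using PP_comp one' ab by (metis transpose_commute)
    qed
  qed
  have "PP p"
  proof (rule permutes_induct[OF p finite_atLeastAtMost])
    show "PP id" using L_id K_one by (simp add: PP_def permutes_id)
  next
    fix a b q assume "a \<in> {1..n}" "b \<in> {1..n}" "PP q"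
    thus "PP (Transposition.transpose a b \<circ> q)" using PP_comp all by blast
  qed
  thus ?thesis by (simp add: PP_def)
qed

lemma hli_K: "hl n 2 \<in> K \<Longrightarrow> hli n 2 \<in> K"
proof -
  assume "hl n 2 \<in> K"
  moreover have "2 \<in> {2..n}" using n2 by simp
  ultimately show ?thesis using K_minv hl_inv by metis
qed

lemma line_adj:
  assumes h: "hl n 2 \<in> K" and T: "TT (Xn n) (lp 1) (lp 2) \<in> K"
  shows "TT (Xn n) (lp k) (lp (k+1)) \<in> K"
proof (cases "k \<ge> 1")
  case True
  thus ?thesis
  proof (induction k rule: int_ge_induct)
    case base thus ?case using T by simp
  next
    case (step i)
    have "TT (Xn n) (hl n 2 (lp i)) (hl n 2 (lp (i+1))) \<in> K"
      by (rule K_conjT[OF h lp_X lp_X step.IH]) (use n2 in auto)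
    thus ?case using hl_lp n2 by (simp add: add.assoc)
  qed
next
  case False
  hence "k \<le> 1" by simp
  thus ?thesis
  proof (induction k rule: int_le_induct)
    case base thus ?case using T by simp
  next
    case (step i)
    have "TT (Xn n) (hli n 2 (lp i)) (hli n 2 (lp (i+1))) \<in> K"
      by (rule K_conjT[OF hli_K[OF h] lp_X lp_X step.IH]) (use n2 in auto)
    thus ?case using hli_lp n2 by simp
  qed
qed

lemma line_all:
  assumes h: "hl n 2 \<in> K" and T: "TT (Xn n) (lp 1) (lp 2) \<in> K"
  shows "TT (Xn n) (lp 0) (lp k) \<in> K"
proof (cases "k \<ge> 1")
  case True
  thus ?thesis
  proof (induction k rule: int_ge_induct)
    case base thus ?case using line_adj[OF h T, of 0] by simp
  next
    case (step i)
    have "compose (Xn n) (TT (Xn n) (lp (i+1)) (lp i)) (compose (Xn n) (TT (Xn n) (lp i) (lp 0)) (TT (Xn n) (lp (i+1)) (lp i)))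
      = TT (Xn n) (lp (i+1)) (lp 0)"
      by (rule TT_triple) (use n2 lp_X step.hyps in \<open>auto dest: lp_inj\<close>)
    moreover have "TT (Xn n) (lp (i+1)) (lp i) \<in> K" using line_adj[OF h T, of i] TT_commute by metis
    moreover have "TT (Xn n) (lp i) (lp 0) \<in> K" using step.IH TT_commute by metis
    ultimately show ?case using K_comp TT_commute by metis
  qed
next
  case False
  show ?thesis
  proof (cases "k = 0")
    case True thus ?thesis using K_one by (simp add: TT_same)
  next
    case False
    hence "k \<le> -1" using \<open>\<not> k \<ge> 1\<close> by simp
    thus ?thesis
    proof (induction k rule: int_le_induct)
      case base
      have "TT (Xn n) (lp (-1)) (lp 0) \<in> K" using line_adj[OF h T, of "-1"] by simp
      thus ?case by (metis TT_commute)
    next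
      case (step i)
      have "compose (Xn n) (TT (Xn n) (lp (i-1)) (lp i)) (compose (Xn n) (TT (Xn n) (lp i) (lp 0)) (TT (Xn n) (lp (i-1)) (lp i)))
        = TT (Xn n) (lp (i-1)) (lp 0)"
        by (rule TT_triple) (use n2 lp_X step.hyps in \<open>auto dest: lp_inj\<close>)
      moreover have "TT (Xn n) (lp (i-1)) (lp i) \<in> K" using line_adj[OF h T, of "i-1"] by simp
      moreover have "TT (Xn n) (lp i) (lp 0) \<in> K" using step.IH TT_commute by metis
      ultimately show ?case using K_comp TT_commute by metis
    qed
  qed
qed

lemma pt_q:
  assumes h: "hl n 2 \<in> K" and T: "TT (Xn n) (lp 1) (lp 2) \<in> K"
  and lifts: "\<And>\<sigma>. \<sigma> permutes {1..n} \<Longrightarrow> perm_lift n \<sigma> \<in> K"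
  and y: "y \<in> Xn n"
  shows "TT (Xn n) (2,1) y \<in> K"
proof -
  obtain i m where im: "y = (i, m)" "1 \<le> i" "i \<le> n" "1 \<le> m" using y by (cases y) (auto simp: Xn_iff)
  have lp0: "lp 0 = (2,1)" by (simp add: lp_def)
  show ?thesis
  proof (cases "i \<le> 2")
    case True
    hence "i \<in> {1,2}" using im by auto
    then obtain k where "lp k = y" using lp_surj[of i m] im by auto
    thus ?thesis using line_all[OF h T, of k] lp0 by simp
  next
    case False
    obtain k where k: "lp k = (1, m)" using lp_surj[of 1 m] im by auto
    have tr: "Transposition.transpose 1 i permutes {1..n}" using im by (intro permutes_swap_id) auto
    have "TT (Xn n) (perm_lift n (Transposition.transpose 1 i) (2,1)) (perm_lift n (Transposition.transpose 1 i) (1,m)) \<in> K"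
      by (rule K_conjT[OF lifts[OF tr]]) (use im n2 line_all[OF h T, of k] k lp0 in \<open>auto simp: Xn_iff\<close>)
    thus ?thesis using im n2 False by (simp add: perm_lift_def Xn_iff)
  qed
qed

lemma pt_all:
  assumes h: "hl n 2 \<in> K" and T: "TT (Xn n) (lp 1) (lp 2) \<in> K"
  and lifts: "\<And>\<sigma>. \<sigma> permutes {1..n} \<Longrightarrow> perm_lift n \<sigma> \<in> K"
  and x: "x \<in> Xn n" and y: "y \<in> Xn n"
  shows "TT (Xn n) x y \<in> K"
proof -
  have q: "(2::nat,1::nat) \<in> Xn n" using n2 by (simp add: Xn_iff)
  note P = pt_q[OF h T lifts]
  show ?thesis
  proof (cases "x = y \<or> x = (2,1) \<or> y = (2,1)")
    case True thus ?thesis using P x y K_one TT_same TT_commute by metis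
  next
    case False
    have "compose (Xn n) (TT (Xn n) x (2,1)) (compose (Xn n) (TT (Xn n) (2,1) y) (TT (Xn n) x (2,1))) = TT (Xn n) x y"
      by (rule TT_triple) (use False x y q in auto)
    thus ?thesis using P x y K_comp TT_commute by metis
  qed
qed

lemma finitary:
  assumes pts: "\<And>x y. x \<in> Xn n \<Longrightarrow> y \<in> Xn n \<Longrightarrow> TT (Xn n) x y \<in> K"
  and F: "F \<in> Bij (Xn n)" and fx: "\<And>x. x \<in> Xn n \<Longrightarrow> N \<le> snd x \<Longrightarrow> F x = x"
  shows "F \<in> K"
proof -
  define S where "S = {1..n} \<times> {1..<N}"
  have finS: "finite S" by (simp add: S_def)
  have SX: "S \<subseteq> Xn n" by (auto simp: S_def Xn_def)
  have bij: "bij_betw F (Xn n) (Xn n)" and Fext: "F \<in> extensional (Xn n)" using F by (auto simp: Bij_def)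
  have inj: "inj_on F (Xn n)" using bij by (auto simp: bij_betw_def)
  have FX: "F x \<in> Xn n" if "x \<in> Xn n" for x using bij that by (auto simp: bij_betw_def)
  have XS: "x \<in> Xn n \<Longrightarrow> x \<notin> S \<Longrightarrow> N \<le> snd x" for x by (cases x) (auto simp: S_def Xn_def)
  have FS: "F x \<in> S" if "x \<in> S" for x
  proof (rule ccontr)
    assume "F x \<notin> S"
    moreover have "F x \<in> Xn n" using FX[of x] SX that by blast
    ultimately have "F (F x) = F x" using fx XS by auto
    hence "F x = x" using inj FX SX that by (meson inj_on_eq_iff subsetD)
    thus False using \<open>F x \<notin> S\<close> that by simp
  qed
  have imS: "F ` S = S"
  proof -
    have "F ` S \<subseteq> S" using FS by auto
    moreover have "card (F ` S) = card S" using inj SX by (meson card_image inj_on_subset)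
    ultimately show ?thesis using finS by (simp add: card_subset_eq)
  qed
  define p where "p x = (if x \<in> S then F x else x)" for x
  have pperm: "p permutes S"
  proof (rule bij_imp_permutes)
    have "inj_on F S" using inj SX inj_on_subset by blast
    hence "bij_betw F S S" using imS by (simp add: bij_betw_def)
    thus "bij_betw p S S" by (rule bij_betw_cong[THEN iffD1, rotated]) (simp add: p_def)
  qed (simp add: p_def)
  have Fp: "F = restrict p (Xn n)"
  proof (rule ext)
    fix x show "F x = restrict p (Xn n) x"
      using Fext fx XS by (cases "x \<in> Xn n") (auto simp: p_def extensional_def simp del: split_paired_All)
  qed
  have "restrict q (Xn n) \<in> K" if "q permutes S" for q
  proof (rule permutes_induct[OF that finS])
    show "restrict id (Xn n) \<in> K" using K_one by (simp add: id_def)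
  next
    fix a b q assume ab: "a \<in> S" "b \<in> S" and q: "restrict q (Xn n) \<in> K" "q permutes S"
    have "q ` Xn n \<subseteq> Xn n" using q(2) SX
      by (auto, metis permutes_not_in permutes_in_image subsetD)
    hence "compose (Xn n) (TT (Xn n) a b) (restrict q (Xn n)) = restrict (Transposition.transpose a b \<circ> q) (Xn n)"
      unfolding TT_def by (rule compose_restrict)
    thus "restrict (Transposition.transpose a b \<circ> q) (Xn n) \<in> K"
      using K_comp pts ab SX q(1) by (metis subsetD)
  qed
  thus ?thesis using pperm Fp by simp
qed

lemma exists_E:
  assumes hK: "\<And>j. j \<in> {2..n} \<Longrightarrow> hl n j \<in> K"
  shows "(\<Sum>i\<in>{1..n}. t i) = 0 \<Longrightarrow> \<exists>E\<in>K. ET n E t"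
proof (induction "\<Sum>i\<in>{2..n}. nat \<bar>t i\<bar>" arbitrary: t rule: less_induct)
  case less
  have split: "(\<Sum>i\<in>{1..n}. f i) = f 1 + (\<Sum>i\<in>{2..n}. f i)" for f :: "nat \<Rightarrow> int"
  proof -
    have "{1..n} = insert 1 {2..n}" using n2 by auto
    thus ?thesis by simp
  qed
  show ?case
  proof (cases "\<forall>j\<in>{2..n}. t j = 0")
    case True
    hence "t 1 = 0" using less.prems split[of t] by simp
    hence "ET n (\<lambda>x\<in>Xn n. x) t" using True
      by (intro ET_one) (metis atLeastAtMost_iff le_antisym not_less_eq_eq one_add_one plus_1_eq_Suc)
    thus ?thesis using K_one by blast
  next
    case False
    then obtain j where j: "j \<in> {2..n}" "t j \<noteq> 0" by blast
    have j1: "j \<noteq> 1" using j by auto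
    have hjB: "hl n j \<in> Bij (Xn n)" using hl_Bij j by blast
    show ?thesis
    proof (cases "t j < 0")
      case True
      define t' where "t' i = t i - dl j i" for i
      have s': "(\<Sum>i\<in>{1..n}. t' i) = 0" using less.prems sum_dl[OF j(1)] by (simp add: t'_def sum_subtractf)
      have lt: "(\<Sum>i\<in>{2..n}. nat \<bar>t' i\<bar>) < (\<Sum>i\<in>{2..n}. nat \<bar>t i\<bar>)"
        by (rule sum_strict_mono_ex1) (use j True in \<open>auto simp: t'_def dl_def\<close>)
      obtain E' where E': "E' \<in> K" "ET n E' t'" using less.hyps[OF lt s'] by blast
      have "ET n (compose (Xn n) (hl n j) E') (\<lambda>i. dl j i + t' i)" by (rule ET_comp[OF ET_hl[OF j(1)] E'(2)])
      hence "ET n (compose (Xn n) (hl n j) E') t" by (rule ET_cong) (simp add: t'_def)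
      thus ?thesis using K_comp hK j E' by blast
    next
      case False
      define t' where "t' i = t i + dl j i" for i
      have s': "(\<Sum>i\<in>{1..n}. t' i) = 0" using less.prems sum_dl[OF j(1)] by (simp add: t'_def sum.distrib)
      have lt: "(\<Sum>i\<in>{2..n}. nat \<bar>t' i\<bar>) < (\<Sum>i\<in>{2..n}. nat \<bar>t i\<bar>)"
        by (rule sum_strict_mono_ex1) (use j False in \<open>auto simp: t'_def dl_def\<close>)
      obtain E' where E': "E' \<in> K" "ET n E' t'" using less.hyps[OF lt s'] by blast
      have "ET n (compose (Xn n) (restrict (inv_into (Xn n) (hl n j)) (Xn n)) E') (\<lambda>i. - dl j i + t' i)"
        by (rule ET_comp[OF ET_inv[OF hjB ET_hl[OF j(1)]] E'(2)])
      hence "ET n (compose (Xn n) (restrict (inv_into (Xn n) (hl n j)) (Xn n)) E') t" by (rule ET_cong) (simp add: t'_def)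
      thus ?thesis using K_comp K_inv hK j E' by blast
    qed
  qed
qed

lemma Hn_K:
  assumes hK: "\<And>j. j \<in> {2..n} \<Longrightarrow> hl n j \<in> K"
  and pts: "\<And>x y. x \<in> Xn n \<Longrightarrow> y \<in> Xn n \<Longrightarrow> TT (Xn n) x y \<in> K"
  and g: "g \<in> Hn n"
  shows "g \<in> K"
proof -
  obtain t where t: "ET n g t" using ET_Hn[OF g] by blast
  have G: "g \<in> Bij (Xn n)" using g by (simp add: Hn_def)
  obtain E where E: "E \<in> K" "ET n E t" using exists_E[OF hK ET_sum[OF G t]] by blast
  have EB: "E \<in> Bij (Xn n)" using K_Bij E by blast
  define F where "F = compose (Xn n) (restrict (inv_into (Xn n) E) (Xn n)) g"
  have "ET n F (\<lambda>i. - t i + t i)" unfolding F_def by (rule ET_comp[OF ET_inv[OF EB E(2)] t])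
  hence "ET n F (\<lambda>_. 0)" by (rule ET_cong) simp
  then obtain N where N: "\<forall>x\<in>Xn n. N \<le> snd x \<longrightarrow> F x = x" using ET_zero by blast
  have FB: "F \<in> Bij (Xn n)" unfolding F_def by (intro compose_Bij restrict_inv_into_Bij EB G)
  have FK: "F \<in> K" by (rule finitary[OF pts FB]) (use N in auto)
  have grp: "group (BijGroup (Xn n))" by (rule group_BijGroup)
  have Finv: "F = m_inv (BijGroup (Xn n)) E \<otimes>\<^bsub>BijGroup (Xn n)\<^esub> g"
    using EB G restrict_inv_into_Bij[OF EB] by (simp add: F_def G_mult inv_BijGroup)
  have "g = E \<otimes>\<^bsub>BijGroup (Xn n)\<^esub> F"
    using group.inv_solve_left[OF grp, of F E g] Finv FB EB G by (simp add: G_carrier)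
  thus ?thesis using subgroup.m_closed[OF sg E(1) FK] by simp
qed

lemma HnSn_K:
  assumes c: "perm_lift n (cyc n) \<in> K" and s: "perm_lift n (Transposition.transpose 1 2) \<in> K"
  and h: "hl n 2 \<in> K" and T: "TT (Xn n) (1,1) (1,2) \<in> K"
  shows "HnSn n \<subseteq> K"
proof -
  have lifts: "\<And>\<sigma>. \<sigma> permutes {1..n} \<Longrightarrow> perm_lift n \<sigma> \<in> K" using PP_all[OF c s] by blast
  have hK: "hl n j \<in> K" if j: "j \<in> {2..n}" for j
  proof -
    have tr: "Transposition.transpose 2 j permutes {1..n}" using j by (intro permutes_swap_id) auto
    show ?thesis using hl_conj[OF j] K_comp lifts[OF tr] h by metis
  qed
  have T': "TT (Xn n) (lp 1) (lp 2) \<in> K" using T by (simp add: lp_def)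
  have pts: "\<And>x y. x \<in> Xn n \<Longrightarrow> y \<in> Xn n \<Longrightarrow> TT (Xn n) x y \<in> K" using pt_all[OF h T' lifts] by blast
  have "Hn n \<subseteq> K" using Hn_K[OF hK pts] by blast
  moreover have "Sn_lift n \<subseteq> K" using lifts by (auto simp: Sn_lift_def)
  ultimately show ?thesis
    unfolding HnSn_def SymX_def
    by (intro group.generate_subgroup_incl[OF group_BijGroup] sg) auto
qed

end

lemma hl_Hn: "2 \<le> n \<Longrightarrow> hl n 2 \<in> Hn n"
  unfolding Hn_def
  apply (simp add: hl_Bij)
  apply (rule exI[of _ "\<lambda>_. 2"], rule exI[of _ "dl 2"])
  by (auto simp: hl_def dl_def Xn_iff)

lemma TT_Hn: "2 \<le> n \<Longrightarrow> TT (Xn n) (1,1) (1,2) \<in> Hn n"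
  unfolding Hn_def
  apply (simp add: TT_Bij Xn_iff)
  apply (rule exI[of _ "\<lambda>_. 3"], rule exI[of _ "\<lambda>_. 0"])
  by (auto simp: TT_def Xn_iff Transposition.transpose_def)

lemma cyc2: "cyc 2 = Transposition.transpose 1 2"
  by (rule ext) (auto simp: cyc_def Transposition.transpose_def)

theorem lemma3p1:
  fixes n :: nat
  assumes "n \<ge> 2"
  shows "\<exists>A. A \<subseteq> HnSn n \<and> finite A \<and> card A \<le> 3 \<and> generate (SymX n) A = HnSn n"
proof -
  define s where "s = perm_lift n (Transposition.transpose 1 2)"
  define c where "c = perm_lift n (cyc n)"
  define h where "h = hl n 2"
  define T where "T = TT (Xn n) (1,1) (1,2)"
  define A where "A = (if n = 2 then {s, h, T} else {c, s, h})"
  have grp: "group (BijGroup (Xn n))" by (rule group_BijGroup)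
  have "Transposition.transpose 1 2 permutes {1..n}" using assms by (intro permutes_swap_id) auto
  hence sL: "s \<in> Sn_lift n" unfolding s_def Sn_lift_def by blast
  have cL: "c \<in> Sn_lift n" unfolding c_def Sn_lift_def using assms cyc_permutes by auto
  have hH: "h \<in> Hn n" unfolding h_def using hl_Hn assms by blast
  have TH: "T \<in> Hn n" unfolding T_def using TT_Hn assms by blast
  have AS: "A \<subseteq> Hn n \<union> Sn_lift n" using sL cL hH TH by (auto simp: A_def)
  have HSc: "Hn n \<union> Sn_lift n \<subseteq> carrier (BijGroup (Xn n))"
    using L_Bij by (auto simp: Hn_def Sn_lift_def G_carrier)
  have sub1: "A \<subseteq> HnSn n" using AS unfolding HnSn_def by (auto intro: generate.incl)
  have fin: "finite A" by (simp add: A_def)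
  have card: "card A \<le> 3" unfolding A_def
    by (auto intro!: order.trans[OF card_insert_le_m1] simp: card_insert_if)
  define K where "K = generate (SymX n) A"
  have sg: "subgroup K (BijGroup (Xn n))"
    unfolding K_def SymX_def using AS HSc by (intro group.generate_is_subgroup[OF grp]) auto
  have inc: "\<And>x. x \<in> A \<Longrightarrow> x \<in> K" unfolding K_def by (rule generate.incl)
  have sK: "s \<in> K" and hK: "h \<in> K" using inc by (auto simp: A_def)
  have cK: "c \<in> K" using inc sK by (cases "n = 2") (auto simp: A_def c_def s_def cyc2)
  have TK: "T \<in> K"
  proof (cases "n = 2")
    case True thus ?thesis using inc by (auto simp: A_def)
  next
    case False
    hence n3: "3 \<le> n" using assms by simp
    have lifts: "\<And>\<sigma>. \<sigma> permutes {1..n} \<Longrightarrow> perm_lift n \<sigma> \<in> K"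
      using PP_all[OF assms sg] cK sK unfolding c_def s_def by blast
    have tr: "Transposition.transpose 2 3 permutes {1..n}" using n3 by (intro permutes_swap_id) auto
    have j3: "(3::nat) \<in> {2..n}" and j2: "(2::nat) \<in> {2..n}" using n3 by auto
    have h3: "hl n 3 \<in> K" using hl_conj[OF j3] K_comp[OF assms sg] lifts[OF tr] hK unfolding h_def by metis
    have i2: "hli n 2 \<in> K" using K_minv[OF assms sg] hl_inv[OF j2] hK unfolding h_def by metis
    have i3: "hli n 3 \<in> K" using K_minv[OF assms sg] hl_inv[OF j3] h3 by metis
    show ?thesis using comm[OF n3] K_comp[OF assms sg] hK h3 i2 i3 unfolding T_def h_def by metis
  qed
  have "HnSn n \<subseteq> K" using HnSn_K[OF assms sg] cK sK hK TK unfolding c_def s_def h_def T_def by blast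
  moreover have "K \<subseteq> HnSn n" unfolding K_def HnSn_def SymX_def
    using AS by (rule group.mono_generate[OF grp])
  ultimately have "generate (SymX n) A = HnSn n" unfolding K_def by blast
  thus ?thesis using sub1 fin card by blast
qed

end
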